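(* Let $F$ be a field with separable closure $F_s$ and absolute Galois group $\Gamma=\mathrm{Gal}(F_s/F)$. Let $W(D_4)\subset\mathrm{O}_4(\mathbb R)$ be the group of matrices $D\cdot P(\pi)$ with $D=\mathrm{diag}(\varepsilon_1,\dots,\varepsilon_4)$, $\varepsilon_i=\pm1$, $\prod\varepsilon_i=1$, $P(\pi)$ the permutation matrix of $\pi\in\mathfrak S_4$, and let $\tilde\mu$, $\tilde\rho$ be the trialitarian automorphisms given by conjugation by $$\mu=\tfrac12\begin{pmatrix}1&1&1&-1\\1&1&-1&1\\1&-1&1&1\\1&-1&-1&-1\end{pmatrix},\qquad \rho=\tfrac12\begin{pmatrix}-1&1&1&1\\-1&-1&1&-1\\-1&-1&-1&1\\-1&1&-1&-1\end{pmatrix}.$$ Let $\xi\in H^1(F,W(D_4))$ be a class fixed by $\tilde\mu_*$. Then there exists $\alpha\in\{\tilde\mu,\tilde\rho\}$ such that $\xi$ lies in the image of the map $H^1(F,\mathrm{Fix}(\alpha))\to H^1(F,W(D_4))$ induced by the inclusion $\mathrm{Fix}(\alpha)\subset W(D_4)$.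
   Context: For a finite group $G$ (with trivial $\Gamma$-action), $H^1(F,G)$ is the set of continuous homomorphisms $\Gamma\to G$ modulo conjugation by elements of $G$. An automorphism $\alpha$ of $W(D_4)$ acts on $H^1(F,W(D_4))$ by $\alpha_*[\varphi]=[\alpha\circ\varphi]$; this action depends only on the class of $\alpha$ modulo inner automorphisms. $\mathrm{Fix}(\alpha)=\{x\in W(D_4)\mid\alpha(x)=x\}$. A trialitarian automorphism is a non-inner automorphism of order $3$. *)

theory Defs
  imports "HOL-Analysis.Analysis" "HOL-Algebra.Group"
begin

definition diag_mat :: "(4 \<Rightarrow> real) \<Rightarrow> real^4^4" where
  "diag_mat e = (\<chi> i j. if i = j then e i else 0)"

definition perm_mat :: "(4 \<Rightarrow> 4) \<Rightarrow> real^4^4" where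
  "perm_mat p = (\<chi> i j. if i = p j then 1 else 0)"

definition WD4 :: "(real^4^4) set" where
  "WD4 = {diag_mat e ** perm_mat p | e p.
            (\<forall>i. e i = 1 \<or> e i = -1) \<and> (\<Prod>i\<in>UNIV. e i) = 1 \<and> p permutes UNIV}"

definition WD4_group :: "(real^4^4) monoid" where
  "WD4_group = \<lparr>carrier = WD4, monoid.mult = (\<lambda>A B. A ** B), one = mat 1\<rparr>"

text \<open>Rows are listed top to bottom; the index type 4 is enumerated 1,2,3,0 by vector.\<close>
definition mu_mat :: "real^4^4" where
  "mu_mat = (1/2) *\<^sub>R (vector [vector [1,1,1,-1], vector [1,1,-1,1],
                               vector [1,-1,1,1], vector [1,-1,-1,-1]] :: real^4^4)"

definition rho_mat :: "real^4^4" where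
  "rho_mat = (1/2) *\<^sub>R (vector [vector [-1,1,1,1], vector [-1,-1,1,-1],
                                vector [-1,-1,-1,1], vector [-1,1,-1,-1]] :: real^4^4)"

definition conj_by :: "real^4^4 \<Rightarrow> real^4^4 \<Rightarrow> real^4^4" where
  "conj_by M x = M ** x ** matrix_inv M"

definition mu_aut :: "real^4^4 \<Rightarrow> real^4^4" where "mu_aut = conj_by mu_mat"
definition rho_aut :: "real^4^4 \<Rightarrow> real^4^4" where "rho_aut = conj_by rho_mat"

definition Fix :: "(real^4^4 \<Rightarrow> real^4^4) \<Rightarrow> (real^4^4) set" where
  "Fix a = {x \<in> WD4. a x = x}"

definition topological_group :: "('a, 'm) monoid_scheme \<Rightarrow> 'a topology \<Rightarrow> bool" where
  "topological_group G T \<longleftrightarrow> group G \<and> topspace T = carrier G \<and>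
     continuous_map (prod_topology T T) T (\<lambda>(x, y). x \<otimes>\<^bsub>G\<^esub> y) \<and>
     continuous_map T T (\<lambda>x. inv\<^bsub>G\<^esub> x)"

definition cont_hom :: "('a, 'm) monoid_scheme \<Rightarrow> 'a topology \<Rightarrow> ('b, 'n) monoid_scheme \<Rightarrow> ('a \<Rightarrow> 'b) set" where
  "cont_hom G T K = {\<phi> \<in> hom G K. continuous_map T (discrete_topology (carrier K)) \<phi>}"

definition conj_equiv :: "('a, 'm) monoid_scheme \<Rightarrow> 'a topology \<Rightarrow> ('b, 'n) monoid_scheme \<Rightarrow> (('a \<Rightarrow> 'b) \<times> ('a \<Rightarrow> 'b)) set" where
  "conj_equiv G T K = {(\<phi>, \<psi>). \<phi> \<in> cont_hom G T K \<and> \<psi> \<in> cont_hom G T K \<and>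
      (\<exists>g \<in> carrier K. \<forall>x \<in> carrier G. \<psi> x = g \<otimes>\<^bsub>K\<^esub> \<phi> x \<otimes>\<^bsub>K\<^esub> inv\<^bsub>K\<^esub> g)}"

definition H1 :: "('a, 'm) monoid_scheme \<Rightarrow> 'a topology \<Rightarrow> ('b, 'n) monoid_scheme \<Rightarrow> ('a \<Rightarrow> 'b) set set" where
  "H1 G T K = cont_hom G T K // conj_equiv G T K"

definition H1_class :: "('a, 'm) monoid_scheme \<Rightarrow> 'a topology \<Rightarrow> ('b, 'n) monoid_scheme \<Rightarrow> ('a \<Rightarrow> 'b) \<Rightarrow> ('a \<Rightarrow> 'b) set" where
  "H1_class G T K \<phi> = conj_equiv G T K `` {\<phi>}"

definition H1_act :: "('a, 'm) monoid_scheme \<Rightarrow> 'a topology \<Rightarrow> ('b, 'n) monoid_scheme \<Rightarrow> ('b \<Rightarrow> 'b) \<Rightarrow> ('a \<Rightarrow> 'b) set \<Rightarrow> ('a \<Rightarrow> 'b) set" where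
  "H1_act G T K a \<xi> = H1_class G T K (a \<circ> (SOME \<phi>. \<phi> \<in> \<xi>))"

definition H1_incl_image :: "('a, 'm) monoid_scheme \<Rightarrow> 'a topology \<Rightarrow> ('b, 'n) monoid_scheme \<Rightarrow> 'b set \<Rightarrow> ('a \<Rightarrow> 'b) set set" where
  "H1_incl_image G T K S = {H1_class G T K \<psi> | \<psi>. \<psi> \<in> cont_hom G T (K\<lparr>carrier := S\<rparr>)}"

end

theory Submission
  imports Defs
begin
definition mm :: "int list list \<Rightarrow> int list list \<Rightarrow> int list list" where
 "mm A B = map (\<lambda>r. map (\<lambda>c. sum_list (map2 (*) r c)) (List.transpose B)) A"
definition rmul :: "int list list \<Rightarrow> int list \<Rightarrow> nat list \<Rightarrow> int list list" where
 "rmul M el pl = map (\<lambda>row. map (\<lambda>p. row ! p * el ! p) pl) M"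
definition madd :: "int list list \<Rightarrow> int list list \<Rightarrow> int list list" where
 "madd A B = map2 (map2 (+)) A B"
definition msm :: "int \<Rightarrow> int list list \<Rightarrow> int list list" where
 "msm c A = map (map ((*) c)) A"
definition idm :: "int list list" where
 "idm = [[1,0,0,0],[0,1,0,0],[0,0,1,0],[0,0,0,1]]"
definition mu2 :: "int list list" where
 "mu2 = [[1,1,1,-1],[1,1,-1,1],[1,-1,1,1],[1,-1,-1,-1]]"
definition rho2 :: "int list list" where
 "rho2 = [[-1,1,1,1],[-1,-1,1,-1],[-1,-1,-1,1],[-1,1,-1,-1]]"
definition okS :: "int list \<Rightarrow> bool" where
 "okS l = (length l = 4 \<and> list_all (\<lambda>x. x = 1 \<or> x = -1) l \<and> prod_list l = 1)"
definition okP :: "nat list \<Rightarrow> bool" where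
 "okP l = (length l = 4 \<and> list_all (\<lambda>x. x < 4) l \<and> distinct l)"
definition signs :: "int list list" where
 "signs = filter okS (List.n_lists 4 [1,-1])"
definition perms :: "nat list list" where
 "perms = filter okP (List.n_lists 4 [0,1,2,3])"
definition valid :: "int list \<times> nat list \<Rightarrow> int list \<times> nat list \<times> bool \<times> int list \<Rightarrow> bool" where
 "valid gp w = (case gp of (el, pl) \<Rightarrow> case w of (eh, ph, fl, cs) \<Rightarrow>
    okS eh \<and> okP ph \<and>
    (let N = rmul mu2 el pl; N2 = mm N N; N3 = mm N2 N;
         A = (if fl then mu2 else rho2); B = List.transpose (rmul (List.transpose (rmul A eh ph)) eh ph) in
     msm 4 B = madd (madd (msm (cs!0) idm) (msm (cs!1) N)) (madd (msm (cs!2) N2) (msm (cs!3) N3))))"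
definition table :: "(int list \<times> nat list \<times> bool \<times> int list) list" where
 "table = [([1,-1,-1,1],[2,1,0,3],True,[0,-4,0,0]),
 ([1,-1,-1,1],[2,1,0,3],True,[8,-4,0,1]),
 ([1,-1,-1,1],[2,1,0,3],True,[8,-4,0,1]),
 ([1,1,1,1],[2,3,1,0],False,[0,-4,0,0]),
 ([1,1,1,1],[3,2,1,0],False,[0,-4,0,0]),
 ([1,-1,-1,1],[2,1,0,3],True,[8,-4,0,1]),
 ([1,1,1,1],[2,1,0,3],True,[8,4,0,-1]),
 ([1,1,1,1],[2,1,0,3],True,[0,4,0,0]),
 ([1,1,1,1],[2,3,0,1],False,[-8,0,2,0]),
 ([1,1,1,1],[2,3,0,1],True,[8,-4,0,1]),
 ([1,1,1,1],[3,2,0,1],True,[8,-4,0,1]),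
 ([1,1,1,1],[3,2,0,1],False,[-8,0,2,0]),
 ([1,1,1,1],[2,0,3,1],False,[-8,0,2,0]),
 ([1,1,1,1],[3,0,2,1],True,[8,-4,0,1]),
 ([1,1,1,1],[2,0,1,3],True,[8,4,0,-1]),
 ([1,1,1,1],[3,0,2,1],False,[-8,0,2,0]),
 ([1,1,1,1],[2,0,1,3],True,[0,4,0,0]),
 ([1,1,1,1],[2,0,3,1],True,[8,-4,0,1]),
 ([1,1,1,1],[0,3,2,1],True,[8,-4,0,1]),
 ([1,1,1,1],[0,2,3,1],False,[-8,0,2,0]),
 ([1,1,1,1],[0,3,2,1],False,[-8,0,2,0]),
 ([1,1,1,1],[0,2,1,3],True,[8,4,0,-1]),
 ([1,1,1,1],[0,2,3,1],True,[8,-4,0,1]),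
 ([1,1,1,1],[0,2,1,3],True,[0,4,0,0]),
 ([1,1,1,1],[2,1,3,0],True,[0,-4,0,0]),
 ([1,1,1,1],[2,1,3,0],True,[8,-4,0,1]),
 ([1,1,1,1],[0,3,2,1],True,[8,4,0,-1]),
 ([1,1,1,1],[0,3,2,1],False,[-8,0,2,0]),
 ([1,1,1,1],[3,0,2,1],False,[-8,0,2,0]),
 ([1,1,1,1],[3,0,2,1],True,[8,4,0,-1]),
 ([1,-1,-1,1],[2,1,3,0],True,[8,4,0,-1]),
 ([1,-1,-1,1],[2,1,3,0],True,[0,4,0,0]),
 ([1,1,1,1],[0,2,3,1],False,[-8,0,2,0]),
 ([1,1,1,1],[0,2,3,1],True,[8,-4,0,1]),
 ([1,1,1,1],[2,0,3,1],True,[8,-4,0,1]),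
 ([1,1,1,1],[2,0,3,1],False,[-8,0,2,0]),
 ([1,1,1,1],[3,2,0,1],False,[0,4,0,0]),
 ([1,-1,-1,1],[2,1,3,0],True,[8,4,0,-1]),
 ([1,1,1,1],[3,2,1,0],True,[8,4,0,-1]),
 ([1,1,1,1],[3,2,1,0],False,[-8,0,2,0]),
 ([1,1,1,1],[2,0,3,1],True,[0,-4,0,0]),
 ([1,1,1,1],[2,0,1,3],True,[8,4,0,-1]),
 ([1,-1,-1,1],[2,1,3,0],True,[8,4,0,-1]),
 ([1,1,1,1],[2,3,0,1],False,[0,4,0,0]),
 ([1,1,1,1],[2,3,1,0],False,[-8,0,2,0]),
 ([1,1,1,1],[2,3,1,0],True,[8,4,0,-1]),
 ([1,1,1,1],[0,2,1,3],True,[8,4,0,-1]),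
 ([1,1,1,1],[0,2,3,1],True,[0,-4,0,0]),
 ([1,1,1,1],[2,3,1,0],True,[0,-4,0,0]),
 ([1,1,1,1],[3,2,0,1],True,[8,4,0,-1]),
 ([1,1,1,1],[0,2,3,1],True,[8,4,0,-1]),
 ([1,1,1,1],[3,2,0,1],False,[-8,0,2,0]),
 ([1,1,1,1],[0,2,3,1],False,[-8,0,2,0]),
 ([1,1,1,1],[2,3,1,0],True,[8,-4,0,1]),
 ([1,1,1,1],[3,2,1,0],True,[8,4,0,-1]),
 ([1,1,1,1],[2,3,0,1],True,[0,-4,0,0]),
 ([1,1,1,1],[3,0,2,1],False,[0,4,0,0]),
 ([1,1,1,1],[2,1,0,3],True,[8,4,0,-1]),
 ([1,-1,-1,1],[2,3,1,0],True,[8,4,0,-1]),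
 ([1,1,1,1],[2,3,1,0],False,[-8,0,2,0]),
 ([1,1,1,1],[0,3,2,1],False,[-8,0,2,0]),
 ([1,1,1,1],[2,3,0,1],True,[8,-4,0,1]),
 ([1,-1,-1,1],[2,3,1,0],True,[8,4,0,-1]),
 ([1,1,1,1],[2,3,0,1],False,[-8,0,2,0]),
 ([1,-1,-1,1],[2,3,1,0],True,[0,4,0,0]),
 ([1,1,1,1],[0,3,2,1],True,[8,-4,0,1]),
 ([1,1,1,1],[0,2,1,3],True,[8,4,0,-1]),
 ([1,1,1,1],[3,2,1,0],False,[-8,0,2,0]),
 ([1,1,1,1],[2,0,3,1],False,[0,4,0,0]),
 ([1,1,1,1],[2,1,3,0],True,[8,4,0,-1]),
 ([1,-1,-1,1],[2,3,1,0],True,[8,4,0,-1]),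
 ([1,1,1,1],[0,3,2,1],True,[0,-4,0,0]),
 ([1,1,1,1],[3,2,1,0],True,[0,4,0,0]),
 ([1,1,1,1],[2,3,0,1],True,[8,-4,0,1]),
 ([1,1,1,1],[3,2,1,0],True,[8,4,0,-1]),
 ([1,1,1,1],[2,0,3,1],False,[-8,0,2,0]),
 ([1,1,1,1],[2,3,0,1],False,[-8,0,2,0]),
 ([1,1,1,1],[2,0,3,1],True,[8,-4,0,1]),
 ([1,1,1,1],[2,3,1,0],True,[8,-4,0,1]),
 ([1,1,1,1],[3,2,0,1],True,[0,4,0,0]),
 ([1,1,1,1],[3,2,1,0],False,[-8,0,2,0]),
 ([1,-1,-1,1],[3,2,1,0],True,[8,-4,0,1]),
 ([1,1,1,1],[2,1,0,3],True,[8,-4,0,1]),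
 ([1,1,1,1],[0,3,2,1],False,[0,-4,0,0]),
 ([1,1,1,1],[2,3,1,0],False,[-8,0,2,0]),
 ([1,1,1,1],[2,0,1,3],True,[8,-4,0,1]),
 ([1,1,1,1],[2,1,3,0],True,[8,-4,0,1]),
 ([1,1,1,1],[0,2,3,1],False,[0,-4,0,0]),
 ([1,1,1,1],[3,0,2,1],True,[0,4,0,0]),
 ([1,-1,-1,1],[3,2,1,0],True,[8,-4,0,1]),
 ([1,1,1,1],[3,2,0,1],True,[8,4,0,-1]),
 ([1,1,1,1],[3,0,2,1],False,[-8,0,2,0]),
 ([1,1,1,1],[3,2,0,1],False,[-8,0,2,0]),
 ([1,-1,-1,1],[3,2,1,0],True,[8,-4,0,1]),
 ([1,1,1,1],[3,0,2,1],True,[8,4,0,-1]),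
 ([1,-1,-1,1],[3,2,1,0],True,[0,-4,0,0]),
 ([1,1,1,1],[3,2,1,0],True,[0,-4,0,0]),
 ([1,1,1,1],[2,3,0,1],True,[8,4,0,-1]),
 ([1,1,1,1],[3,2,1,0],True,[8,-4,0,1]),
 ([1,1,1,1],[2,0,3,1],False,[-8,0,2,0]),
 ([1,1,1,1],[2,3,0,1],False,[-8,0,2,0]),
 ([1,1,1,1],[2,0,3,1],True,[8,4,0,-1]),
 ([1,1,1,1],[2,3,1,0],True,[8,4,0,-1]),
 ([1,1,1,1],[3,2,0,1],True,[0,-4,0,0]),
 ([1,1,1,1],[3,2,1,0],False,[-8,0,2,0]),
 ([1,-1,-1,1],[3,2,1,0],True,[8,4,0,-1]),
 ([1,1,1,1],[2,1,0,3],True,[8,4,0,-1]),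
 ([1,1,1,1],[0,3,2,1],False,[0,4,0,0]),
 ([1,1,1,1],[2,3,1,0],False,[-8,0,2,0]),
 ([1,1,1,1],[2,0,1,3],True,[8,4,0,-1]),
 ([1,1,1,1],[2,1,3,0],True,[8,4,0,-1]),
 ([1,1,1,1],[0,2,3,1],False,[0,4,0,0]),
 ([1,1,1,1],[3,0,2,1],True,[0,-4,0,0]),
 ([1,-1,-1,1],[3,2,1,0],True,[8,4,0,-1]),
 ([1,1,1,1],[3,2,0,1],True,[8,-4,0,1]),
 ([1,1,1,1],[3,0,2,1],False,[-8,0,2,0]),
 ([1,1,1,1],[3,2,0,1],False,[-8,0,2,0]),
 ([1,-1,-1,1],[3,2,1,0],True,[8,4,0,-1]),
 ([1,1,1,1],[3,0,2,1],True,[8,-4,0,1]),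
 ([1,-1,-1,1],[3,2,1,0],True,[0,4,0,0]),
 ([1,1,1,1],[2,3,1,0],True,[0,4,0,0]),
 ([1,1,1,1],[3,2,0,1],True,[8,-4,0,1]),
 ([1,1,1,1],[0,2,3,1],True,[8,-4,0,1]),
 ([1,1,1,1],[3,2,0,1],False,[-8,0,2,0]),
 ([1,1,1,1],[0,2,3,1],False,[-8,0,2,0]),
 ([1,1,1,1],[2,3,1,0],True,[8,4,0,-1]),
 ([1,1,1,1],[3,2,1,0],True,[8,-4,0,1]),
 ([1,1,1,1],[2,3,0,1],True,[0,4,0,0]),
 ([1,1,1,1],[3,0,2,1],False,[0,-4,0,0]),
 ([1,1,1,1],[2,1,0,3],True,[8,-4,0,1]),
 ([1,-1,-1,1],[2,3,1,0],True,[8,-4,0,1]),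
 ([1,1,1,1],[2,3,1,0],False,[-8,0,2,0]),
 ([1,1,1,1],[0,3,2,1],False,[-8,0,2,0]),
 ([1,1,1,1],[2,3,0,1],True,[8,4,0,-1]),
 ([1,-1,-1,1],[2,3,1,0],True,[8,-4,0,1]),
 ([1,1,1,1],[2,3,0,1],False,[-8,0,2,0]),
 ([1,-1,-1,1],[2,3,1,0],True,[0,-4,0,0]),
 ([1,1,1,1],[0,3,2,1],True,[8,4,0,-1]),
 ([1,1,1,1],[0,2,1,3],True,[8,-4,0,1]),
 ([1,1,1,1],[3,2,1,0],False,[-8,0,2,0]),
 ([1,1,1,1],[2,0,3,1],False,[0,-4,0,0]),
 ([1,1,1,1],[2,1,3,0],True,[8,-4,0,1]),
 ([1,-1,-1,1],[2,3,1,0],True,[8,-4,0,1]),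
 ([1,1,1,1],[0,3,2,1],True,[0,4,0,0]),
 ([1,1,1,1],[2,1,3,0],True,[0,4,0,0]),
 ([1,1,1,1],[2,1,3,0],True,[8,4,0,-1]),
 ([1,1,1,1],[0,3,2,1],True,[8,-4,0,1]),
 ([1,1,1,1],[0,3,2,1],False,[-8,0,2,0]),
 ([1,1,1,1],[3,0,2,1],False,[-8,0,2,0]),
 ([1,1,1,1],[3,0,2,1],True,[8,-4,0,1]),
 ([1,-1,-1,1],[2,1,3,0],True,[8,-4,0,1]),
 ([1,-1,-1,1],[2,1,3,0],True,[0,-4,0,0]),
 ([1,1,1,1],[0,2,3,1],False,[-8,0,2,0]),
 ([1,1,1,1],[0,2,3,1],True,[8,4,0,-1]),
 ([1,1,1,1],[2,0,3,1],True,[8,4,0,-1]),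
 ([1,1,1,1],[2,0,3,1],False,[-8,0,2,0]),
 ([1,1,1,1],[3,2,0,1],False,[0,-4,0,0]),
 ([1,-1,-1,1],[2,1,3,0],True,[8,-4,0,1]),
 ([1,1,1,1],[3,2,1,0],True,[8,-4,0,1]),
 ([1,1,1,1],[3,2,1,0],False,[-8,0,2,0]),
 ([1,1,1,1],[2,0,3,1],True,[0,4,0,0]),
 ([1,1,1,1],[2,0,1,3],True,[8,-4,0,1]),
 ([1,-1,-1,1],[2,1,3,0],True,[8,-4,0,1]),
 ([1,1,1,1],[2,3,0,1],False,[0,-4,0,0]),
 ([1,1,1,1],[2,3,1,0],False,[-8,0,2,0]),
 ([1,1,1,1],[2,3,1,0],True,[8,-4,0,1]),
 ([1,1,1,1],[0,2,1,3],True,[8,-4,0,1]),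
 ([1,1,1,1],[0,2,3,1],True,[0,4,0,0]),
 ([1,-1,-1,1],[2,1,0,3],True,[0,4,0,0]),
 ([1,-1,-1,1],[2,1,0,3],True,[8,4,0,-1]),
 ([1,-1,-1,1],[2,1,0,3],True,[8,4,0,-1]),
 ([1,1,1,1],[2,3,1,0],False,[0,4,0,0]),
 ([1,1,1,1],[3,2,1,0],False,[0,4,0,0]),
 ([1,-1,-1,1],[2,1,0,3],True,[8,4,0,-1]),
 ([1,1,1,1],[2,1,0,3],True,[8,-4,0,1]),
 ([1,1,1,1],[2,1,0,3],True,[0,-4,0,0]),
 ([1,1,1,1],[2,3,0,1],False,[-8,0,2,0]),
 ([1,1,1,1],[2,3,0,1],True,[8,4,0,-1]),
 ([1,1,1,1],[3,2,0,1],True,[8,4,0,-1]),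
 ([1,1,1,1],[3,2,0,1],False,[-8,0,2,0]),
 ([1,1,1,1],[2,0,3,1],False,[-8,0,2,0]),
 ([1,1,1,1],[3,0,2,1],True,[8,4,0,-1]),
 ([1,1,1,1],[2,0,1,3],True,[8,-4,0,1]),
 ([1,1,1,1],[3,0,2,1],False,[-8,0,2,0]),
 ([1,1,1,1],[2,0,1,3],True,[0,-4,0,0]),
 ([1,1,1,1],[2,0,3,1],True,[8,4,0,-1]),
 ([1,1,1,1],[0,3,2,1],True,[8,4,0,-1]),
 ([1,1,1,1],[0,2,3,1],False,[-8,0,2,0]),
 ([1,1,1,1],[0,3,2,1],False,[-8,0,2,0]),
 ([1,1,1,1],[0,2,1,3],True,[8,-4,0,1]),
 ([1,1,1,1],[0,2,3,1],True,[8,4,0,-1]),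
 ([1,1,1,1],[0,2,1,3],True,[0,-4,0,0])]"

lemma check: "list_all2 valid (List.product signs perms) table"
  by code_simp

definition ix :: "4 \<Rightarrow> nat" where
  "ix i = (if i = 1 then 0 else if i = 2 then 1 else if i = 3 then 2 else 3)"
definition ixv :: "nat \<Rightarrow> 4" where
  "ixv k = (if k = 0 then 1 else if k = 1 then 2 else if k = 2 then 3 else 4)"

lemma four_distinct[simp]: "(1::4) \<noteq> 2" "(1::4) \<noteq> 3" "(1::4) \<noteq> 4" "(2::4) \<noteq> 3" "(2::4) \<noteq> 4" "(3::4) \<noteq> 4"
  "(2::4) \<noteq> 1" "(3::4) \<noteq> 1" "(4::4) \<noteq> 1" "(3::4) \<noteq> 2" "(4::4) \<noteq> 2" "(4::4) \<noteq> 3"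
  by simp_all

lemma ix_simps[simp]: "ix 1 = 0" "ix 2 = 1" "ix 3 = 2" "ix 4 = 3"
  by (simp_all add: ix_def)

lemma ix_lt[simp]: "ix i < 4"
  by (simp add: ix_def)

lemma ixv_ix[simp]: "ixv (ix i) = i"
  using exhaust_4[of i] by (auto simp: ixv_def)

lemma lt4: "(k::nat) < 4 \<longleftrightarrow> k = 0 \<or> k = 1 \<or> k = 2 \<or> k = 3"
  by auto

lemma ix_ixv[simp]: "k < 4 \<Longrightarrow> ix (ixv k) = k"
  by (auto simp: lt4 ixv_def)

lemma ix_inj[simp]: "ix i = ix j \<longleftrightarrow> i = j"
  by (metis ixv_ix)

definition tomat :: "int list list \<Rightarrow> real^4^4" where
  "tomat L = (\<chi> i j. of_int (L ! ix i ! ix j))"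

lemma tomat_nth: "tomat L $ i $ j = of_int (L ! ix i ! ix j)"
  by (simp add: tomat_def)

lemma tomat_eqI: "(\<And>i j. i < 4 \<Longrightarrow> j < 4 \<Longrightarrow> A!i!j = B!i!j) \<Longrightarrow> tomat A = tomat B"
  by (simp add: tomat_def vec_eq_iff)

lemma vec4_eqI: "(\<And>i j. i < 4 \<Longrightarrow> j < 4 \<Longrightarrow> (X::real^4^4) $ ixv i $ ixv j = Y $ ixv i $ ixv j) \<Longrightarrow> X = Y"
  by (simp add: vec_eq_iff) (metis ix_lt ixv_ix)

definition wf4 :: "int list list \<Rightarrow> bool" where
  "wf4 L = (length L = 4 \<and> (\<forall>r\<in>set L. length r = 4))"

lemma list4: "length xs = 4 \<Longrightarrow> xs = [xs!0, xs!1, xs!2, xs!3]"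
  by (simp add: numeral_eq_Suc length_Suc_conv) (auto)

lemma wf4_explicit: "wf4 L \<Longrightarrow> L = [[L!0!0,L!0!1,L!0!2,L!0!3],[L!1!0,L!1!1,L!1!2,L!1!3],
   [L!2!0,L!2!1,L!2!2,L!2!3],[L!3!0,L!3!1,L!3!2,L!3!3]]"
proof -
  assume w: "wf4 L"
  then have l: "length L = 4" and r: "\<And>k. k < 4 \<Longrightarrow> length (L!k) = 4" by (auto simp: wf4_def)
  have "L = [L!0, L!1, L!2, L!3]" using list4[OF l] .
  also have "\<dots> = [[L!0!0,L!0!1,L!0!2,L!0!3],[L!1!0,L!1!1,L!1!2,L!1!3],
   [L!2!0,L!2!1,L!2!2,L!2!3],[L!3!0,L!3!1,L!3!2,L!3!3]]"
    using list4[OF r[of 0]] list4[OF r[of 1]] list4[OF r[of 2]] list4[OF r[of 3]] by simp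
  finally show ?thesis .
qed

definition expl :: "int list list \<Rightarrow> int list list" where
  "expl L = [[L!0!0,L!0!1,L!0!2,L!0!3],[L!1!0,L!1!1,L!1!2,L!1!3],
   [L!2!0,L!2!1,L!2!2,L!2!3],[L!3!0,L!3!1,L!3!2,L!3!3]]"

lemma expl_id: "wf4 L \<Longrightarrow> expl L = L"
  unfolding expl_def by (rule wf4_explicit[symmetric])

lemma mm_nth: assumes "wf4 A" "wf4 B" "i < 4" "j < 4"
  shows "mm A B ! i ! j = A!i!0*B!0!j + A!i!1*B!1!j + A!i!2*B!2!j + A!i!3*B!3!j"
proof -
  have "mm A B ! i ! j = mm (expl A) (expl B) ! i ! j" using assms by (simp add: expl_id)
  also have "\<dots> = A!i!0*B!0!j + A!i!1*B!1!j + A!i!2*B!2!j + A!i!3*B!3!j"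
    using assms(3,4) unfolding lt4 by (auto simp: mm_def expl_def)
  finally show ?thesis .
qed

lemma wf4_mm: assumes "wf4 A" "wf4 B" shows "wf4 (mm A B)"
proof -
  have "mm A B = mm (expl A) (expl B)" using assms by (simp add: expl_id)
  moreover have "wf4 (mm (expl A) (expl B))" by (simp add: mm_def expl_def wf4_def)
  ultimately show ?thesis by simp
qed

lemma tomat_mm: assumes "wf4 A" "wf4 B" shows "tomat (mm A B) = tomat A ** tomat B"
  by (rule vec4_eqI) (simp add: tomat_nth matrix_matrix_mult_def sum_4 mm_nth[OF assms])


definition spm :: "int list \<Rightarrow> nat list \<Rightarrow> real^4^4" where
  "spm el pl = (\<chi> i j. if ix i = pl ! ix j then of_int (el ! ix i) else 0)"

lemma sum4_delta: "p < 4 \<Longrightarrow> (\<Sum>k\<in>UNIV. if ix k = p then f k else 0) = (f (ixv p) :: real)"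
  unfolding lt4 by (auto simp: sum_4 ixv_def)

lemma okP_lt: "okP pl \<Longrightarrow> j < 4 \<Longrightarrow> pl ! j < 4"
  by (auto simp: okP_def list_all_length)

lemma wf4_rmul: "wf4 M \<Longrightarrow> okP pl \<Longrightarrow> wf4 (rmul M el pl)"
  by (auto simp: wf4_def rmul_def okP_def)

lemma tomat_rmul: assumes "wf4 M" "okP pl"
  shows "tomat (rmul M el pl) = tomat M ** spm el pl"
proof (rule vec4_eqI)
  fix i j :: nat assume ij: "i < 4" "j < 4"
  have lM: "length M = 4" and lp: "length pl = 4" using assms by (auto simp: wf4_def okP_def)
  have p4: "pl ! j < 4" using okP_lt[OF assms(2) ij(2)] .
  have "(tomat M ** spm el pl) $ ixv i $ ixv j =
     (\<Sum>k\<in>UNIV. if ix k = pl ! j then of_int (M ! i ! ix k) * of_int (el ! ix k) else 0)"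
    using ij by (auto simp: matrix_matrix_mult_def tomat_nth spm_def intro!: sum.cong)
  also have "\<dots> = of_int (M ! i ! (pl ! j)) * of_int (el ! (pl ! j))"
    using p4 by (simp add: sum4_delta)
  also have "\<dots> = tomat (rmul M el pl) $ ixv i $ ixv j"
    using ij lM lp by (simp add: tomat_nth rmul_def)
  finally show "tomat (rmul M el pl) $ ixv i $ ixv j = (tomat M ** spm el pl) $ ixv i $ ixv j" ..
qed

lemma wf4_transpose: assumes "wf4 A" shows "wf4 (List.transpose A)"
proof -
  have "List.transpose A = List.transpose (expl A)" using assms by (simp add: expl_id)
  moreover have "wf4 (List.transpose (expl A))" by (simp add: expl_def wf4_def)
  ultimately show ?thesis by simp
qed

lemma tr_nth: assumes "wf4 A" "i < 4" "j < 4" shows "List.transpose A ! i ! j = A ! j ! i"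
proof -
  have "List.transpose A ! i ! j = List.transpose (expl A) ! i ! j" using assms by (simp add: expl_id)
  also have "\<dots> = A ! j ! i" using assms(2,3) unfolding lt4 by (auto simp: expl_def)
  finally show ?thesis .
qed

lemma tomat_transpose: "wf4 A \<Longrightarrow> tomat (List.transpose A) = transpose (tomat A)"
  by (rule vec4_eqI) (simp add: tomat_nth transpose_def tr_nth)

lemma madd_nth: "wf4 A \<Longrightarrow> wf4 B \<Longrightarrow> i < 4 \<Longrightarrow> j < 4 \<Longrightarrow> madd A B ! i ! j = A!i!j + B!i!j"
  by (auto simp: madd_def wf4_def)

lemma wf4_madd: "wf4 A \<Longrightarrow> wf4 B \<Longrightarrow> wf4 (madd A B)"
  by (auto simp: madd_def wf4_def set_zip)

lemma tomat_madd: "wf4 A \<Longrightarrow> wf4 B \<Longrightarrow> tomat (madd A B) = tomat A + tomat B"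
  by (rule vec4_eqI) (simp add: tomat_nth madd_nth)

lemma wf4_msm: "wf4 A \<Longrightarrow> wf4 (msm c A)"
  by (auto simp: msm_def wf4_def)

lemma tomat_msm: "wf4 A \<Longrightarrow> tomat (msm c A) = of_int c *\<^sub>R tomat A"
  by (rule vec4_eqI) (auto simp: tomat_nth msm_def wf4_def)

lemma wf4_idm: "wf4 idm" by (simp add: wf4_def idm_def)

lemma tomat_idm: "tomat idm = mat 1"
  by (rule vec4_eqI) (auto simp: tomat_nth idm_def mat_def lt4 ixv_def)

lemma wf4_mu2: "wf4 mu2" and wf4_rho2: "wf4 rho2"
  by (simp_all add: wf4_def mu2_def rho2_def)

lemma vector_4 [simp]:
 "(vector [x,y,z,w] ::('a::zero)^4)$1 = x"
 "(vector [x,y,z,w] ::('a::zero)^4)$2 = y"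
 "(vector [x,y,z,w] ::('a::zero)^4)$3 = z"
 "(vector [x,y,z,w] ::('a::zero)^4)$4 = w"
  unfolding vector_def by simp_all

lemma mu_tomat: "mu_mat = (1/2) *\<^sub>R tomat mu2"
  by (rule vec4_eqI) (auto simp: tomat_nth mu_mat_def mu2_def lt4 ixv_def)

lemma rho_tomat: "rho_mat = (1/2) *\<^sub>R tomat rho2"
  by (rule vec4_eqI) (auto simp: tomat_nth rho_mat_def rho2_def lt4 ixv_def)


lemma dp_entry: "(diag_mat e ** perm_mat p) $ i $ j = (if i = p j then e i else 0)"
proof -
  have "\<forall>k. (diag_mat e $ i $ k) * (perm_mat p $ k $ j) = (if k = i then (if i = p j then e i else 0) else 0)"
    by (auto simp: diag_mat_def perm_mat_def)
  then have "(diag_mat e ** perm_mat p) $ i $ j = (\<Sum>k\<in>UNIV. if k = i then (if i = p j then e i else 0) else 0)"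
    by (simp add: matrix_matrix_mult_def)
  also have "\<dots> = (if i = p j then e i else 0)" by (simp add: sum.delta')
  finally show ?thesis .
qed

lemma WD4_E: assumes "x \<in> WD4"
  obtains e p where "\<forall>i. e i = 1 \<or> e i = -1" "(\<Prod>i\<in>UNIV. e i) = 1" "p permutes UNIV"
    "x = diag_mat e ** perm_mat p"
  using assms unfolding WD4_def by blast

lemma WD4_I: "\<forall>i. e i = 1 \<or> e i = -1 \<Longrightarrow> (\<Prod>i\<in>UNIV. e i) = 1 \<Longrightarrow> p permutes UNIV \<Longrightarrow>
    diag_mat e ** perm_mat p \<in> WD4"
  unfolding WD4_def by blast

lemma prod_4: "prod f (UNIV::4 set) = f 1 * f 2 * f 3 * f 4"
  unfolding UNIV_4 by (simp add: ac_simps)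

lemma nth_i4: "k < 4 \<Longrightarrow> [0,1,2,3::nat] ! k = k"
  unfolding lt4 by auto

lemma WD4_enum: assumes "x \<in> WD4"
  shows "\<exists>el pl. el \<in> set signs \<and> pl \<in> set perms \<and> x = spm el pl"
proof -
  obtain e p where e: "\<forall>i. e i = 1 \<or> e i = -1" and pe: "(\<Prod>i\<in>UNIV. e i) = 1"
    and p: "p permutes UNIV" and x: "x = diag_mat e ** perm_mat p"
    using assms by (rule WD4_E)
  define el :: "int list" where "el = map (\<lambda>k. if e (ixv k) = 1 then 1 else -1) [0,1,2,3]"
  define pl where "pl = map (\<lambda>k. ix (p (ixv k))) [0,1,2,3::nat]"
  have el_nth: "el ! ix i = (if e i = 1 then 1 else -1)" for i
    using exhaust_4[of i] by (auto simp: el_def ixv_def)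
  have pl_nth: "pl ! ix i = ix (p i)" for i
    using exhaust_4[of i] by (auto simp: pl_def ixv_def)
  have eel: "of_int (el ! ix i) = e i" for i using e[rule_format, of i] by (auto simp: el_nth)
  have "x = spm el pl"
    by (rule vec4_eqI) (simp add: x dp_entry spm_def pl_nth eel)
  moreover have "el \<in> set signs"
  proof -
    have "real_of_int (prod_list el) = e 1 * e 2 * e 3 * e 4"
      using eel[of 1] eel[of 2] eel[of 3] eel[of 4] by (simp add: el_def)
    also have "\<dots> = 1" using pe by (simp add: prod_4)
    finally have "prod_list el = 1" by simp
    moreover have "set el \<subseteq> {1,-1}" by (auto simp: el_def)
    ultimately show ?thesis by (auto simp: signs_def set_n_lists okS_def el_def)
  qed
  moreover have "pl \<in> set perms"
  proof -
    have inj: "inj p" using p by (rule permutes_inj)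
    have "distinct pl" using inj by (auto simp: pl_def ixv_def inj_eq)
    moreover have "set pl \<subseteq> {0,1,2,3}" using ix_lt by (auto simp: pl_def lt4)
    ultimately show ?thesis by (auto simp: perms_def set_n_lists okP_def pl_def list_all_iff)
  qed
  ultimately show ?thesis by blast
qed

lemma okS_el: "okS el \<Longrightarrow> k < 4 \<Longrightarrow> el ! k = 1 \<or> el ! k = -1"
  by (auto simp: okS_def list_all_length)

lemma spm_WD4: assumes "okS el" "okP pl" shows "spm el pl \<in> WD4"
proof -
  define e where "e = (\<lambda>i. real_of_int (el ! ix i))"
  define p where "p = (\<lambda>i. ixv (pl ! ix i))"
  have lel: "length el = 4" and lpl: "length pl = 4" and dpl: "distinct pl"
    using assms by (auto simp: okS_def okP_def)
  have "inj p"
  proof (rule injI)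
    fix i j assume "p i = p j"
    then have "ix (p i) = ix (p j)" by simp
    then have "pl ! ix i = pl ! ix j" using okP_lt[OF assms(2)] by (simp add: p_def)
    then have "ix i = ix j" using dpl lpl by (simp add: nth_eq_iff_index_eq)
    then show "i = j" by simp
  qed
  then have "bij p" using finite_UNIV_inj_surj[of p] by (simp add: bij_def)
  then have pp: "p permutes UNIV" by (rule bij_imp_permutes) simp
  have "el ! ix i = 1 \<or> el ! ix i = -1" for i using okS_el[OF assms(1) ix_lt] .
  then have e1: "\<forall>i. e i = 1 \<or> e i = -1"
    by (force simp: e_def)
  have "prod_list el = el!0 * el!1 * el!2 * el!3"
    by (subst list4[OF lel]) simp
  then have pe: "(\<Prod>i\<in>UNIV. e i) = 1" using assms(1)
    by (simp add: prod_4 e_def okS_def) (metis of_int_1 of_int_mult)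
  have "spm el pl = diag_mat e ** perm_mat p"
  proof (rule vec4_eqI)
    fix i j :: nat assume ij: "i < 4" "j < 4"
    have "pl ! j < 4" using okP_lt[OF assms(2) ij(2)] .
    then have "(ixv i = ixv (pl ! j)) = (i = pl ! j)" using ij by (metis ix_ixv)
    then show "spm el pl $ ixv i $ ixv j = (diag_mat e ** perm_mat p) $ ixv i $ ixv j"
      using ij by (simp add: dp_entry spm_def p_def e_def)
  qed
  then show ?thesis using WD4_I[OF e1 pe pp] by simp
qed

lemma signs_okS: "el \<in> set signs \<Longrightarrow> okS el" by (simp add: signs_def)
lemma perms_okP: "pl \<in> set perms \<Longrightarrow> okP pl" by (simp add: perms_def)



lemma WD4_entry: assumes "x \<in> WD4"
  obtains e p where "\<forall>i. e i = 1 \<or> e i = -1" "(\<Prod>i\<in>UNIV. e i) = 1" "p permutes UNIV"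
    "x = diag_mat e ** perm_mat p" "\<And>i j. x $ i $ j = (if i = p j then e i else 0)"
proof -
  obtain e p where "\<forall>i. e i = 1 \<or> e i = -1" "(\<Prod>i\<in>UNIV. e i) = 1" "p permutes UNIV"
    "x = diag_mat e ** perm_mat p" using assms by (rule WD4_E)
  then show ?thesis using that dp_entry by blast
qed

lemma WD4_orth: assumes "x \<in> WD4" shows "transpose x ** x = mat 1" "x ** transpose x = mat 1"
proof -
  obtain e p where e: "\<forall>i. e i = 1 \<or> e i = -1" and p: "p permutes UNIV"
    and xe: "\<And>i j. x $ i $ j = (if i = p j then e i else 0)"
    using assms by (rule WD4_entry) blast
  have inj: "inj p" using p by (rule permutes_inj)
  have ee: "e k * e k = 1" for k using e[rule_format, of k] by auto
  have "(transpose x ** x) $ i $ j = mat 1 $ i $ j" for i j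
  proof -
    have "\<forall>k. transpose x $ i $ k * x $ k $ j = (if k = p i then (if i = j then 1 else 0) else 0)"
      using ee inj by (auto simp: transpose_def xe inj_eq)
    then have "(transpose x ** x) $ i $ j = (\<Sum>k\<in>UNIV. if k = p i then (if i = j then 1 else 0) else 0)"
      by (simp add: matrix_matrix_mult_def)
    also have "\<dots> = mat 1 $ i $ j" by (simp add: sum.delta' mat_def)
    finally show ?thesis .
  qed
  then show t: "transpose x ** x = mat 1" by (simp add: vec_eq_iff)
  then show "x ** transpose x = mat 1" by (simp add: matrix_left_right_inverse)
qed

lemma WD4_transpose: assumes "x \<in> WD4" shows "transpose x \<in> WD4"
proof -
  obtain e p where e: "\<forall>i. e i = 1 \<or> e i = -1" and pe: "(\<Prod>i\<in>UNIV. e i) = 1" and p: "p permutes UNIV"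
    and xe: "\<And>i j. x $ i $ j = (if i = p j then e i else 0)"
    using assms by (rule WD4_entry) blast
  have ip: "Hilbert_Choice.inv p permutes UNIV" using p by (rule permutes_inv)
  have "transpose x = diag_mat (e \<circ> p) ** perm_mat (Hilbert_Choice.inv p)"
    by (auto simp: vec_eq_iff transpose_def xe dp_entry permutes_inverses[OF p])
  moreover have "(\<Prod>i\<in>UNIV. (e \<circ> p) i) = 1" using pe prod.permute[OF p, of e] by simp
  ultimately show ?thesis using WD4_I[OF _ _ ip, of "e \<circ> p"] e by simp
qed

lemma WD4_mult: assumes "x \<in> WD4" "y \<in> WD4" shows "x ** y \<in> WD4"
proof -
  obtain e p where e: "\<forall>i. e i = 1 \<or> e i = -1" and pe: "(\<Prod>i\<in>UNIV. e i) = 1" and p: "p permutes UNIV"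
    and xe: "\<And>i j. x $ i $ j = (if i = p j then e i else 0)"
    using assms(1) by (rule WD4_entry) blast
  obtain f q where f: "\<forall>i. f i = 1 \<or> f i = -1" and qf: "(\<Prod>i\<in>UNIV. f i) = 1" and q: "q permutes UNIV"
    and ye: "\<And>i j. y $ i $ j = (if i = q j then f i else 0)"
    using assms(2) by (rule WD4_entry) blast
  have ip: "Hilbert_Choice.inv p permutes UNIV" using p by (rule permutes_inv)
  have "(x ** y) $ i $ j = (diag_mat (\<lambda>i. e i * f (Hilbert_Choice.inv p i)) ** perm_mat (p \<circ> q)) $ i $ j" for i j
  proof -
    have "\<forall>k. x $ i $ k * y $ k $ j = (if k = q j then (if i = p (q j) then e i * f (q j) else 0) else 0)"
      by (auto simp: xe ye)
    then have "(x ** y) $ i $ j = (\<Sum>k\<in>UNIV. if k = q j then (if i = p (q j) then e i * f (q j) else 0) else 0)"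
      by (simp add: matrix_matrix_mult_def)
    also have "\<dots> = (if i = p (q j) then e i * f (q j) else 0)" by (simp add: sum.delta')
    finally show ?thesis by (auto simp: dp_entry permutes_inverses[OF p])
  qed
  then have xy: "x ** y = diag_mat (\<lambda>i. e i * f (Hilbert_Choice.inv p i)) ** perm_mat (p \<circ> q)" by (simp add: vec_eq_iff)
  have s1: "\<forall>i. e i * f (Hilbert_Choice.inv p i) = 1 \<or> e i * f (Hilbert_Choice.inv p i) = -1"
  proof
    fix i show "e i * f (Hilbert_Choice.inv p i) = 1 \<or> e i * f (Hilbert_Choice.inv p i) = -1"
      using e[rule_format, of i] f[rule_format, of "Hilbert_Choice.inv p i"] by auto
  qed
  have s2: "(\<Prod>i\<in>UNIV. e i * f (Hilbert_Choice.inv p i)) = 1"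
    using pe qf prod.permute[OF ip, of f] by (simp add: prod.distrib comp_def)
  have s3: "p \<circ> q permutes UNIV" using p q by (rule permutes_compose[rotated])
  show ?thesis unfolding xy by (rule WD4_I[OF s1 s2 s3])
qed

lemma WD4_one: "mat 1 \<in> WD4"
proof -
  have "mat 1 = diag_mat (\<lambda>_. 1) ** (perm_mat id :: real^4^4)"
    by (auto simp: vec_eq_iff dp_entry mat_def)
  then show ?thesis using WD4_I[of "\<lambda>_. 1" id] permutes_id by simp
qed

lemma WD4_group: "group WD4_group"
proof (rule groupI)
  fix x assume "x \<in> carrier WD4_group"
  then have x: "x \<in> WD4" by (simp add: WD4_group_def)
  show "\<exists>y\<in>carrier WD4_group. y \<otimes>\<^bsub>WD4_group\<^esub> x = \<one>\<^bsub>WD4_group\<^esub>"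
    using WD4_transpose[OF x] WD4_orth[OF x] by (auto simp: WD4_group_def)
qed (auto simp: WD4_group_def WD4_mult WD4_one matrix_mul_assoc)

lemma WD4_inv: "x \<in> WD4 \<Longrightarrow> inv\<^bsub>WD4_group\<^esub> x = transpose x"
  by (rule group.inv_equality[OF WD4_group]) (auto simp: WD4_group_def WD4_orth WD4_transpose)

lemma (in group) conj_equiv_equiv: "equiv (cont_hom H T G) (conj_equiv H T G)"
proof (rule equivI)
  show "conj_equiv H T G \<subseteq> cont_hom H T G \<times> cont_hom H T G"
    by (auto simp: conj_equiv_def)
  show "refl_on (cont_hom H T G) (conj_equiv H T G)"
  proof (rule refl_onI)
    fix \<phi> assume "\<phi> \<in> cont_hom H T G"
    then show "(\<phi>, \<phi>) \<in> conj_equiv H T G"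
      by (auto simp: conj_equiv_def cont_hom_def intro!: bexI[of _ \<one>] dest: hom_in_carrier)
  qed
  show "sym (conj_equiv H T G)"
  proof (rule symI)
    fix \<phi> \<psi> assume "(\<phi>, \<psi>) \<in> conj_equiv H T G"
    then obtain g where g: "g \<in> carrier G" and ph: "\<phi> \<in> cont_hom H T G" and ps: "\<psi> \<in> cont_hom H T G"
      and e: "\<forall>x \<in> carrier H. \<psi> x = g \<otimes> \<phi> x \<otimes> inv g" by (auto simp: conj_equiv_def)
    have "\<forall>x \<in> carrier H. \<phi> x = inv g \<otimes> \<psi> x \<otimes> inv (inv g)"
    proof
      fix x assume x: "x \<in> carrier H"
      have c: "\<phi> x \<in> carrier G" using ph x by (auto simp: cont_hom_def dest: hom_in_carrier)
      show "\<phi> x = inv g \<otimes> \<psi> x \<otimes> inv (inv g)"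
        using e x g c by (simp add: m_assoc[symmetric]) (simp add: m_assoc)
    qed
    then show "(\<psi>, \<phi>) \<in> conj_equiv H T G" using g ph ps unfolding conj_equiv_def by (auto intro!: bexI[of _ "inv g"])
  qed
  show "trans (conj_equiv H T G)"
  proof (rule transI)
    fix \<phi> \<psi> c3 assume "(\<phi>, \<psi>) \<in> conj_equiv H T G" "(\<psi>, c3) \<in> conj_equiv H T G"
    then obtain g h where g: "g \<in> carrier G" and h: "h \<in> carrier G" and ph: "\<phi> \<in> cont_hom H T G"
      and ch: "c3 \<in> cont_hom H T G"
      and e1: "\<forall>x \<in> carrier H. \<psi> x = g \<otimes> \<phi> x \<otimes> inv g"
      and e2: "\<forall>x \<in> carrier H. c3 x = h \<otimes> \<psi> x \<otimes> inv h" by (auto simp: conj_equiv_def)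
    have "\<forall>x \<in> carrier H. c3 x = (h \<otimes> g) \<otimes> \<phi> x \<otimes> inv (h \<otimes> g)"
    proof
      fix x assume x: "x \<in> carrier H"
      have c: "\<phi> x \<in> carrier G" using ph x by (auto simp: cont_hom_def dest: hom_in_carrier)
      show "c3 x = (h \<otimes> g) \<otimes> \<phi> x \<otimes> inv (h \<otimes> g)"
        using e1 e2 x g h c by (simp add: inv_mult_group m_assoc)
    qed
    then show "(\<phi>, c3) \<in> conj_equiv H T G" using g h ph ch by (auto simp: conj_equiv_def)
  qed
qed


lemma matrix_inv_orth: fixes M :: "real^'n^'n"
  assumes "M ** transpose M = mat 1" "transpose M ** M = mat 1"
  shows "matrix_inv M = transpose M"
proof -
  have ex: "\<exists>A'. M ** A' = mat 1 \<and> A' ** M = mat 1" using assms by blast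
  have s: "M ** matrix_inv M = mat 1 \<and> matrix_inv M ** M = mat 1"
    unfolding matrix_inv_def by (rule someI_ex[OF ex])
  have "matrix_inv M = (transpose M ** M) ** matrix_inv M" using assms by simp
  also have "\<dots> = transpose M ** (M ** matrix_inv M)" by (simp add: matrix_mul_assoc)
  also have "\<dots> = transpose M" using s by simp
  finally show ?thesis .
qed

lemma half_orth: assumes w: "wf4 L" and c: "mm L (List.transpose L) = msm 4 idm"
  shows "((1/2) *\<^sub>R tomat L) ** transpose ((1/2) *\<^sub>R tomat L) = mat 1"
    "transpose ((1/2) *\<^sub>R tomat L) ** ((1/2) *\<^sub>R tomat L) = mat 1"
proof -
  have "tomat L ** transpose (tomat L) = tomat (mm L (List.transpose L))"
    using w by (simp add: tomat_mm wf4_transpose tomat_transpose)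
  also have "\<dots> = 4 *\<^sub>R mat 1" by (simp add: c tomat_msm wf4_idm tomat_idm)
  finally have "tomat L ** transpose (tomat L) = 4 *\<^sub>R mat 1" .
  then show 1: "((1/2) *\<^sub>R tomat L) ** transpose ((1/2) *\<^sub>R tomat L) = mat 1"
    by (simp add: transpose_scalar matrix_scalar_ac scalar_matrix_assoc[symmetric])
  then show "transpose ((1/2) *\<^sub>R tomat L) ** ((1/2) *\<^sub>R tomat L) = mat 1"
    by (simp add: matrix_left_right_inverse)
qed

lemma mu_orth: "mu_mat ** transpose mu_mat = mat 1" "transpose mu_mat ** mu_mat = mat 1"
  unfolding mu_tomat
  by (rule half_orth[OF wf4_mu2], simp add: mu2_def mm_def msm_def idm_def)+

lemma rho_orth: "rho_mat ** transpose rho_mat = mat 1" "transpose rho_mat ** rho_mat = mat 1"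
  unfolding rho_tomat
  by (rule half_orth[OF wf4_rho2], simp add: rho2_def mm_def msm_def idm_def)+

lemma mu_aut_eq: "mu_aut y = mu_mat ** y ** transpose mu_mat"
  by (simp add: mu_aut_def conj_by_def matrix_inv_orth mu_orth)

lemma rho_aut_eq: "rho_aut y = rho_mat ** y ** transpose rho_mat"
  by (simp add: rho_aut_def conj_by_def matrix_inv_orth rho_orth)

lemma matrix_add_rdistrib': "((B + C) ** A) = (B ** A) + (C ** (A::real^4^4))"
  by (simp add: matrix_matrix_mult_def vec_eq_iff sum.distrib[symmetric] algebra_simps)

lemma comm_poly: fixes z N :: "real^4^4"
  assumes "z ** N = N ** z"
  shows "z ** (a *\<^sub>R mat 1 + b *\<^sub>R N + (c *\<^sub>R (N ** N) + d *\<^sub>R ((N ** N) ** N)))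
       = (a *\<^sub>R mat 1 + b *\<^sub>R N + (c *\<^sub>R (N ** N) + d *\<^sub>R ((N ** N) ** N))) ** z"
proof -
  have 2: "z ** (N ** N) = (N ** N) ** z" using assms
    by (metis matrix_mul_assoc)
  have 3: "z ** ((N ** N) ** N) = ((N ** N) ** N) ** z" using assms 2
    by (metis matrix_mul_assoc)
  show ?thesis
    by (simp add: matrix_add_ldistrib matrix_add_rdistrib' matrix_scalar_ac scalar_matrix_assoc[symmetric] assms 2 3)
qed


lemma orth_cancel: "P ** Q = mat 1 \<Longrightarrow> X ** P ** Q = (X::real^4^4)"
  by (metis matrix_mul_assoc matrix_mul_rid)

lemma conj_fix: fixes A Hm z :: "real^4^4"
  assumes A1: "A ** transpose A = mat 1" and H1: "Hm ** transpose Hm = mat 1"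
    and c: "z ** (transpose Hm ** A ** Hm) = (transpose Hm ** A ** Hm) ** z"
  shows "A ** (Hm ** z ** transpose Hm) ** transpose A = Hm ** z ** transpose Hm"
proof -
  have H1': "\<And>X::real^4^4. X ** Hm ** transpose Hm = X" using orth_cancel[OF H1] by blast
  have A1': "\<And>X::real^4^4. X ** A ** transpose A = X" using orth_cancel[OF A1] by blast
  have "A ** (Hm ** z ** transpose Hm) = Hm ** ((transpose Hm ** A ** Hm) ** z) ** transpose Hm"
    by (simp add: matrix_mul_assoc H1)
  also have "\<dots> = Hm ** (z ** (transpose Hm ** A ** Hm)) ** transpose Hm" using c by simp
  also have "\<dots> = (Hm ** z ** transpose Hm) ** A"
    by (simp add: matrix_mul_assoc H1')
  finally have "A ** (Hm ** z ** transpose Hm) = (Hm ** z ** transpose Hm) ** A" .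
  then have "A ** (Hm ** z ** transpose Hm) ** transpose A = (Hm ** z ** transpose Hm) ** A ** transpose A"
    by simp
  also have "\<dots> = Hm ** z ** transpose Hm" by (simp add: A1')
  finally show ?thesis .
qed

lemma list_all2_ex: "list_all2 P xs ys \<Longrightarrow> x \<in> set xs \<Longrightarrow> \<exists>y. P x y"
  by (induct rule: list_all2_induct) auto

lemma spm_orth: "okS el \<Longrightarrow> okP pl \<Longrightarrow> spm el pl ** transpose (spm el pl) = mat 1 \<and> transpose (spm el pl) ** spm el pl = mat 1"
  using WD4_orth spm_WD4 by blast

lemma key: assumes g: "g \<in> WD4"
  shows "\<exists>h\<in>WD4. \<exists>\<alpha>\<in>{mu_aut, rho_aut}. \<forall>y\<in>WD4.
           y = g ** mu_aut y ** transpose g \<longrightarrow> \<alpha> (h ** y ** transpose h) = h ** y ** transpose h"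
proof -
  obtain el pl where el: "el \<in> set signs" and pl: "pl \<in> set perms" and gd: "g = spm el pl"
    using WD4_enum[OF g] by blast
  obtain w where "valid (el, pl) w" using list_all2_ex[OF check, of "(el, pl)"] el pl by auto
  then obtain eh ph fl cs where v: "valid (el, pl) (eh, ph, fl, cs)" by (cases w) auto
  define A2 where "A2 = (if fl then mu2 else rho2)"
  define Nl where "Nl = rmul mu2 el pl"
  have oe: "okS eh" and op: "okP ph" and
    eqn: "msm 4 (List.transpose (rmul (List.transpose (rmul A2 eh ph)) eh ph))
        = madd (madd (msm (cs!0) idm) (msm (cs!1) Nl)) (madd (msm (cs!2) (mm Nl Nl)) (msm (cs!3) (mm (mm Nl Nl) Nl)))"
    using v by (simp_all add: valid_def Let_def A2_def Nl_def)
  have opl: "okP pl" using pl by (rule perms_okP)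
  define Hm where "Hm = spm eh ph"
  have HW: "Hm \<in> WD4" unfolding Hm_def using oe op by (rule spm_WD4)
  have Ho: "Hm ** transpose Hm = mat 1" "transpose Hm ** Hm = mat 1" using WD4_orth[OF HW] by auto
  have go: "g ** transpose g = mat 1" "transpose g ** g = mat 1" using WD4_orth[OF g] by auto
  define Am where "Am = (if fl then mu_mat else rho_mat)"
  define \<alpha> where "\<alpha> = (if fl then mu_aut else rho_aut)"
  have \<alpha>in: "\<alpha> \<in> {mu_aut, rho_aut}" by (simp add: \<alpha>_def)
  have \<alpha>eq: "\<alpha> x = Am ** x ** transpose Am" for x by (simp add: \<alpha>_def Am_def mu_aut_eq rho_aut_eq)
  have Ao: "Am ** transpose Am = mat 1" by (simp add: Am_def mu_orth rho_orth)
  have wA2: "wf4 A2" by (simp add: A2_def wf4_mu2 wf4_rho2)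
  have tA2: "tomat A2 = 2 *\<^sub>R Am" by (simp add: A2_def Am_def mu_tomat rho_tomat)
  have tmu2: "tomat mu2 = 2 *\<^sub>R mu_mat" by (simp add: mu_tomat)
  define N where "N = tomat Nl"
  have wN: "wf4 Nl" unfolding Nl_def using wf4_mu2 opl by (rule wf4_rmul)
  have Neq: "N = 2 *\<^sub>R (mu_mat ** g)"
    by (simp add: N_def Nl_def tomat_rmul wf4_mu2 opl gd tmu2 scalar_matrix_assoc)
  have tB: "tomat (List.transpose (rmul (List.transpose (rmul A2 eh ph)) eh ph)) = transpose Hm ** (tomat A2 ** Hm)"
    by (simp add: tomat_transpose tomat_rmul wf4_rmul wf4_transpose wA2 op Hm_def matrix_transpose_mul)
  have wB: "wf4 (List.transpose (rmul (List.transpose (rmul A2 eh ph)) eh ph))"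
    by (simp add: wf4_rmul wf4_transpose wA2 op)
  have poly: "4 *\<^sub>R (transpose Hm ** (tomat A2 ** Hm)) =
      of_int (cs!0) *\<^sub>R mat 1 + of_int (cs!1) *\<^sub>R N + (of_int (cs!2) *\<^sub>R (N ** N) + of_int (cs!3) *\<^sub>R ((N ** N) ** N))"
  proof -
    have "tomat (msm 4 (List.transpose (rmul (List.transpose (rmul A2 eh ph)) eh ph))) =
      tomat (madd (madd (msm (cs!0) idm) (msm (cs!1) Nl)) (madd (msm (cs!2) (mm Nl Nl)) (msm (cs!3) (mm (mm Nl Nl) Nl))))"
      using eqn by simp
    then show ?thesis
      by (simp add: tomat_msm tomat_madd tomat_mm wf4_msm wf4_madd wf4_mm wf4_idm tomat_idm wN wB tB N_def)
  qed
  define h where "h = Hm ** transpose g"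
  have hW: "h \<in> WD4" unfolding h_def using HW WD4_transpose[OF g] by (rule WD4_mult)
  have "\<forall>y\<in>WD4. y = g ** mu_aut y ** transpose g \<longrightarrow> \<alpha> (h ** y ** transpose h) = h ** y ** transpose h"
  proof (intro ballI impI)
    fix y assume yW: "y \<in> WD4" and hy: "y = g ** mu_aut y ** transpose g"
    have mo: "transpose mu_mat ** mu_mat = mat 1" "mu_mat ** transpose mu_mat = mat 1" using mu_orth by auto
    have c1: "\<And>X::real^4^4. X ** transpose g ** g = X" using orth_cancel[OF go(2)] by blast
    have c2: "\<And>X::real^4^4. X ** transpose mu_mat ** mu_mat = X" using orth_cancel[OF mo(1)] by blast
    have c3: "\<And>X::real^4^4. X ** g ** transpose g = X" using orth_cancel[OF go(1)] by blast
    have "y ** g ** mu_mat = (g ** mu_aut y ** transpose g) ** g ** mu_mat"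
      using arg_cong[OF hy, of "\<lambda>X. X ** g ** mu_mat"] by simp
    also have "\<dots> = g ** mu_mat ** y"
      by (simp add: mu_aut_eq matrix_mul_assoc c1 c2)
    finally have yc: "y ** g ** mu_mat = g ** mu_mat ** y" .
    define z where "z = transpose g ** y ** g"
    have "z ** (mu_mat ** g) = transpose g ** (y ** g ** mu_mat) ** g"
      by (simp add: z_def matrix_mul_assoc)
    also have "\<dots> = (mu_mat ** g) ** z"
      by (simp add: yc z_def matrix_mul_assoc go c3)
    finally have zc: "z ** (mu_mat ** g) = (mu_mat ** g) ** z" .
    then have "z ** N = N ** z"
      by (simp add: Neq matrix_scalar_ac scalar_matrix_assoc[symmetric])
    then have "z ** (4 *\<^sub>R (transpose Hm ** (tomat A2 ** Hm))) = (4 *\<^sub>R (transpose Hm ** (tomat A2 ** Hm))) ** z"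
      unfolding poly by (rule comm_poly)
    then have "8 *\<^sub>R (z ** (transpose Hm ** Am ** Hm)) = 8 *\<^sub>R ((transpose Hm ** Am ** Hm) ** z)"
      by (simp add: tA2 matrix_scalar_ac scalar_matrix_assoc[symmetric] matrix_mul_assoc)
    then have "z ** (transpose Hm ** Am ** Hm) = (transpose Hm ** Am ** Hm) ** z" by simp
    then have "Am ** (Hm ** z ** transpose Hm) ** transpose Am = Hm ** z ** transpose Hm"
      using Ao Ho(1) by (intro conj_fix) auto
    moreover have "Hm ** z ** transpose Hm = h ** y ** transpose h"
      by (simp add: z_def h_def matrix_transpose_mul matrix_mul_assoc)
    ultimately show "\<alpha> (h ** y ** transpose h) = h ** y ** transpose h" by (simp add: \<alpha>eq)
  qed
  then show ?thesis using hW \<alpha>in by blast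
qed


lemma cont_disc:
  assumes "continuous_map T (discrete_topology S) f"
    and "\<And>x. x \<in> topspace T \<Longrightarrow> f' x = c (f x)"
    and "f' ` topspace T \<subseteq> S'"
  shows "continuous_map T (discrete_topology S') f'"
  unfolding continuous_map
proof (intro conjI allI impI)
  show "f' ` topspace T \<subseteq> topspace (discrete_topology S')" using assms(3) by simp
  fix U assume "openin (discrete_topology S') U"
  have fS: "f x \<in> S" if "x \<in> topspace T" for x
    using assms(1) that by (auto simp: continuous_map)
  have "{x \<in> topspace T. f' x \<in> U} = {x \<in> topspace T. f x \<in> S \<inter> c -` U}"
    using assms(2) fS by auto
  moreover have "openin T {x \<in> topspace T. f x \<in> S \<inter> c -` U}"
    using assms(1) unfolding continuous_map by (meson inf_le1 openin_discrete_topology)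
  ultimately show "openin T {x \<in> topspace T. f' x \<in> U}" by simp
qed

theorem theorem6p1:
  fixes \<Gamma> :: "('a, 'm) monoid_scheme" and T :: "'a topology"
    and \<xi> :: "('a \<Rightarrow> real^4^4) set"
  assumes "topological_group \<Gamma> T"
    and "\<xi> \<in> H1 \<Gamma> T WD4_group"
    and "H1_act \<Gamma> T WD4_group mu_aut \<xi> = \<xi>"
  shows "\<exists>\<alpha> \<in> {mu_aut, rho_aut}. \<xi> \<in> H1_incl_image \<Gamma> T WD4_group (Fix \<alpha>)"
proof -
  define r where "r = conj_equiv \<Gamma> T WD4_group"
  define C where "C = cont_hom \<Gamma> T WD4_group"
  have top: "topspace T = carrier \<Gamma>" using assms(1) by (simp add: topological_group_def)
  have eqv: "equiv C r" unfolding r_def C_def by (rule group.conj_equiv_equiv[OF WD4_group])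
  obtain \<phi>0 where xi: "\<xi> = r``{\<phi>0}" and p0: "\<phi>0 \<in> C"
    using assms(2) unfolding H1_def r_def C_def by (rule quotientE)
  define \<phi> where "\<phi> = (SOME \<phi>. \<phi> \<in> \<xi>)"
  have "\<phi>0 \<in> \<xi>" unfolding xi using eqv p0 by (rule equiv_class_self)
  then have pxi: "\<phi> \<in> \<xi>" unfolding \<phi>_def by (rule someI[where P = "\<lambda>\<phi>. \<phi> \<in> \<xi>"])
  have "\<xi> = r``{mu_aut \<circ> \<phi>}" using assms(3) by (simp add: H1_act_def H1_class_def r_def \<phi>_def)
  with pxi have "(mu_aut \<circ> \<phi>, \<phi>) \<in> r" by simp
  then obtain g where gW: "g \<in> WD4" and pC: "\<phi> \<in> C"
    and ge: "\<forall>x\<in>carrier \<Gamma>. \<phi> x = g ** mu_aut (\<phi> x) ** inv\<^bsub>WD4_group\<^esub> g"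
    by (auto simp: r_def C_def conj_equiv_def WD4_group_def)
  have ge': "\<phi> x = g ** mu_aut (\<phi> x) ** transpose g" if "x \<in> carrier \<Gamma>" for x
    using ge that WD4_inv[OF gW] by simp
  have phom: "\<phi> \<in> hom \<Gamma> WD4_group" and pcont: "continuous_map T (discrete_topology WD4) \<phi>"
    using pC by (auto simp: C_def cont_hom_def WD4_group_def)
  have pW: "\<phi> x \<in> WD4" if "x \<in> carrier \<Gamma>" for x
    using hom_in_carrier[OF phom that] by (simp add: WD4_group_def)
  obtain h \<alpha> where hW: "h \<in> WD4" and \<alpha>: "\<alpha> \<in> {mu_aut, rho_aut}"
    and hk: "\<forall>y\<in>WD4. y = g ** mu_aut y ** transpose g \<longrightarrow> \<alpha> (h ** y ** transpose h) = h ** y ** transpose h"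
    using key[OF gW] by blast
  define \<psi> where "\<psi> = (\<lambda>x. h ** \<phi> x ** transpose h)"
  have hinv: "inv\<^bsub>WD4_group\<^esub> h = transpose h" using WD4_inv[OF hW] .
  have ho: "transpose h ** h = mat 1" using WD4_orth[OF hW] by auto
  have c1: "\<And>X::real^4^4. X ** transpose h ** h = X" using orth_cancel[OF ho] by blast
  have psiW: "\<psi> x \<in> WD4" if "x \<in> carrier \<Gamma>" for x
    unfolding \<psi>_def using WD4_mult[OF WD4_mult[OF hW pW[OF that]] WD4_transpose[OF hW]] .
  have psiF: "\<psi> x \<in> Fix \<alpha>" if "x \<in> carrier \<Gamma>" for x
    using psiW[OF that] hk pW[OF that] ge'[OF that] by (auto simp: Fix_def \<psi>_def)
  have psimult: "\<psi> (x \<otimes>\<^bsub>\<Gamma>\<^esub> y) = \<psi> x ** \<psi> y" if "x \<in> carrier \<Gamma>" "y \<in> carrier \<Gamma>" for x y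
    using hom_mult[OF phom that] by (simp add: \<psi>_def WD4_group_def matrix_mul_assoc c1)
  have psicont: "continuous_map T (discrete_topology S) \<psi>" if "\<psi> ` carrier \<Gamma> \<subseteq> S" for S
    using cont_disc[OF pcont, of \<psi> "\<lambda>y. h ** y ** transpose h"] that top by (simp add: \<psi>_def)
  have psiC: "\<psi> \<in> C"
    using psiW psimult psicont[of WD4]
    by (auto simp: C_def cont_hom_def WD4_group_def intro!: homI)
  have psiC': "\<psi> \<in> cont_hom \<Gamma> T (WD4_group\<lparr>carrier := Fix \<alpha>\<rparr>)"
    using psiF psimult psicont[of "Fix \<alpha>"]
    by (auto simp: cont_hom_def WD4_group_def intro!: homI)
  have "(\<phi>, \<psi>) \<in> r"
    using pC psiC hW unfolding r_def conj_equiv_def C_def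
    by (auto simp: hinv[unfolded WD4_group_def] \<psi>_def WD4_group_def intro!: bexI[of _ h])
  then have "r``{\<psi>} = r``{\<phi>}" using eqv by (metis equiv_class_eq)
  moreover have "r``{\<phi>} = \<xi>"
  proof -
    have "(\<phi>0, \<phi>) \<in> r" using pxi xi by simp
    then show ?thesis using eqv xi by (simp add: equiv_class_eq)
  qed
  ultimately have "\<xi> = H1_class \<Gamma> T WD4_group \<psi>" by (simp add: H1_class_def r_def)
  then have "\<xi> \<in> H1_incl_image \<Gamma> T WD4_group (Fix \<alpha>)"
    using psiC' by (auto simp: H1_incl_image_def)
  then show ?thesis using \<alpha> by blast
qed

end
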